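(* Let $I,S:\mathbb{R}\to\mathbb{R}$ be $2\pi$-periodic Lipschitz functions with $I\ge0$ and $\min_{\theta\in[-\pi,\pi]}I(\theta)S(\theta)<0<\max_{\theta\in[-\pi,\pi]}I(\theta)S(\theta)$. Let $(\theta_i(t))$ solve $\dot\theta_i=\omega_i+\frac{\kappa}{N}\sum_{j=1}^NI(\theta_j)S(\theta_i)$, $\theta_i(0)=\theta_i^0$. Fix $\mathcal B\subset\{1,\dots,N\}$ and let $\|\Omega_{\mathcal B}\|_\infty=\max_{i\in\mathcal B}|\omega_i|$. If \[ \kappa>\frac{N\|\Omega_{\mathcal B}\|_\infty}{\min\{-\min IS,\max IS\}}, \] then $\sup_{t\ge0}\theta_i(t)-\inf_{t\ge0}\theta_i(t)<2\pi$ for all $i\in\mathcal B$. *)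

theory Defs
  imports "HOL-Analysis.Analysis"
begin

end

theory Submission
  imports Defs
begin
lemma barrier:
  fixes f f' :: "real \<Rightarrow> real"
  assumes deriv: "\<forall>t\<ge>0. (f has_real_derivative f' t) (at t within {0..})"
    and pos: "\<forall>t\<ge>0. f t = c \<longrightarrow> f' t > 0"
    and t0: "0 \<le> t0" and ft0: "c \<le> f t0" and t01: "t0 \<le> t1"
  shows "c \<le> f t1"
proof (rule ccontr)
  assume "\<not> c \<le> f t1"
  hence lt: "f t1 < c" by simp
  have cont0: "continuous_on {0..} f"
    by (rule DERIV_continuous_on[of _ _ f']) (use deriv in auto)
  have cont: "continuous_on {t0..t1} f"
    by (rule continuous_on_subset[OF cont0]) (use t0 in auto)
  define K where "K = {x \<in> {t0..t1}. f x = c}"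
  have "closed K" unfolding K_def
    by (rule continuous_closed_preimage_constant[OF cont]) simp
  moreover have "bounded K" unfolding K_def by (rule bounded_subset[of "{t0..t1}"]) auto
  ultimately have cK: "compact K" by (simp add: compact_eq_bounded_closed)
  obtain z where z: "t0 \<le> z" "z \<le> t1" "f z = c"
    using IVT2'[of f t1 c t0, OF _ ft0 t01 cont] lt by auto
  hence "K \<noteq> {}" unfolding K_def by auto
  then obtain s where sK: "s \<in> K" and smax: "\<forall>y\<in>K. y \<le> s"
    using compact_attains_sup[OF cK] by blast
  have s: "t0 \<le> s" "s \<le> t1" "f s = c" using sK unfolding K_def by auto
  have "s \<noteq> t1" using s lt by auto
  hence st1: "s < t1" using s by simp
  have "f' s > 0" using pos s t0 by auto
  then obtain d where d: "d > 0" and inc: "\<forall>h>0. s + h \<in> {0..} \<longrightarrow> h < d \<longrightarrow> f s < f (s + h)"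
    using has_real_derivative_pos_inc_right[of f "f' s" s "{0..}"] deriv s t0 by auto
  define h where "h = min (d/2) ((t1 - s)/2)"
  have h: "h > 0" "h < d" "s + h < t1" using d st1 unfolding h_def by (auto simp: min_def field_simps)
  have "f (s + h) > c" using inc h s t0 by auto
  moreover have "continuous_on {s+h..t1} f"
    by (rule continuous_on_subset[OF cont]) (use s h in auto)
  ultimately obtain w where w: "s + h \<le> w" "w \<le> t1" "f w = c"
    using IVT2'[of f t1 c "s+h"] lt h by auto
  hence "w \<in> K" unfolding K_def using s h by auto
  with smax have "w \<le> s" by auto
  with w h show False by simp
qed

lemma barrier_up:
  fixes f f' :: "real \<Rightarrow> real"
  assumes deriv: "\<forall>t\<ge>0. (f has_real_derivative f' t) (at t within {0..})"
    and neg: "\<forall>t\<ge>0. f t = c \<longrightarrow> f' t < 0"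
    and t0: "0 \<le> t0" and ft0: "f t0 \<le> c" and t01: "t0 \<le> t1"
  shows "f t1 \<le> c"
proof -
  have "- c \<le> - f t1"
    apply (rule barrier[of "\<lambda>t. - f t" "\<lambda>t. - f' t" "-c" t0 t1])
    using deriv neg t0 ft0 t01 by (auto intro: DERIV_minus)
  thus ?thesis by simp
qed

lemma exI2:
  assumes "hi - lo < 2*pi" "\<forall>t\<ge>0. lo \<le> f t" "\<forall>t\<ge>0. f t \<le> (hi::real)"
  shows "\<exists>lo hi. hi - lo < 2*pi \<and> (\<forall>t\<ge>0. lo \<le> f t \<and> f t \<le> hi)"
  using assms by blast

lemma trap:
  fixes f f' :: "real \<Rightarrow> real"
  assumes deriv: "\<forall>t\<ge>0. (f has_real_derivative f' t) (at t within {0..})"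
    and posA: "\<forall>t\<ge>0. \<forall>k::int. f t = a + 2*pi * of_int k \<longrightarrow> f' t > 0"
    and negB: "\<forall>t\<ge>0. \<forall>k::int. f t = b + 2*pi * of_int k \<longrightarrow> f' t < 0"
    and f0a: "a \<le> f 0" and f0a2: "f 0 < a + 2*pi" and ab: "a < b" and ba: "b < a + 2*pi"
  shows "\<exists>lo hi. hi - lo < 2*pi \<and> (\<forall>t\<ge>0. lo \<le> f t \<and> f t \<le> hi)"
proof -
  have pA0: "\<forall>t\<ge>0. f t = a \<longrightarrow> f' t > 0" using posA[rule_format, of _ 0] by auto
  have pA1: "\<forall>t\<ge>0. f t = a + 2*pi \<longrightarrow> f' t > 0" using posA[rule_format, of _ 1] by auto
  have nB0: "\<forall>t\<ge>0. f t = b \<longrightarrow> f' t < 0" using negB[rule_format, of _ 0] by auto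
  have nB1: "\<forall>t\<ge>0. f t = b + 2*pi \<longrightarrow> f' t < 0" using negB[rule_format, of _ 1] by auto
  have cont0: "continuous_on {0..} f"
    by (rule DERIV_continuous_on[of _ _ f']) (use deriv in auto)
  have contI: "continuous_on {0..T} f" for T
    by (rule continuous_on_subset[OF cont0]) auto
  have LA: "\<forall>t\<ge>0. a \<le> f t" using barrier[OF deriv pA0 _ f0a] by auto
  show ?thesis
  proof (cases "f 0 \<le> b")
    case True
    have "\<forall>t\<ge>0. f t \<le> b" using barrier_up[OF deriv nB0 _ True] by auto
    thus ?thesis using LA ab ba by (intro exI2[of b a]) auto
  next
    case False
    have UB2: "\<forall>t\<ge>0. f t \<le> b + 2*pi" using barrier_up[OF deriv nB1, of 0] False f0a2 ab by auto
    show ?thesis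
    proof (cases "\<exists>t1\<ge>0. f t1 \<le> b")
      case True
      then obtain t1 where t1: "t1 \<ge> 0" "f t1 \<le> b" by auto
      have after: "\<forall>t\<ge>t1. f t \<le> b" using barrier_up[OF deriv nB0 t1(1) t1(2)] by auto
      have before: "\<forall>s\<in>{0..t1}. f s < a + 2*pi"
      proof
        fix s assume s: "s \<in> {0..t1}"
        show "f s < a + 2*pi"
        proof (rule ccontr)
          assume "\<not> f s < a + 2*pi"
          hence "a + 2*pi \<le> f t1" using barrier[OF deriv pA1, of s t1] s by auto
          thus False using t1 ba by simp
        qed
      qed
      obtain p where p: "p \<in> {0..t1}" "\<forall>y\<in>{0..t1}. f y \<le> f p"
        using continuous_attains_sup[of "{0..t1}" f] contI t1 by auto
      have "f p < a + 2*pi" using before p by auto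
      moreover have "\<forall>t\<ge>0. f t \<le> max (f p) b"
      proof (intro allI impI)
        fix t :: real assume "t \<ge> 0"
        show "f t \<le> max (f p) b"
        proof (cases "t \<le> t1")
          case True
            hence "f t \<le> f p" using p \<open>t \<ge> 0\<close> by auto
            thus ?thesis by simp
        next
          case False
            hence "f t \<le> b" using after by auto
            thus ?thesis by simp
        qed
      qed
      ultimately show ?thesis using LA ba by (intro exI2[of "max (f p) b" a]) auto
    next
      case False
      hence gtb: "\<forall>t\<ge>0. b < f t" by auto
      show ?thesis
      proof (cases "\<exists>t2\<ge>0. a + 2*pi \<le> f t2")
        case True
        then obtain t2 where t2: "t2 \<ge> 0" "a + 2*pi \<le> f t2" by auto
        have after: "\<forall>t\<ge>t2. a + 2*pi \<le> f t" using barrier[OF deriv pA1 t2(1) t2(2)] by auto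
        obtain q where q: "q \<in> {0..t2}" "\<forall>y\<in>{0..t2}. f q \<le> f y"
          using continuous_attains_inf[of "{0..t2}" f] contI t2 by auto
        have "b < f q" using gtb q by auto
        moreover have "\<forall>t\<ge>0. min (f q) (a + 2*pi) \<le> f t"
        proof (intro allI impI)
          fix t :: real assume "t \<ge> 0"
          show "min (f q) (a + 2*pi) \<le> f t"
          proof (cases "t \<le> t2")
            case True
            hence "f q \<le> f t" using q \<open>t \<ge> 0\<close> by auto
            thus ?thesis by simp
          next
            case False
            hence "a + 2*pi \<le> f t" using after by auto
            thus ?thesis by simp
          qed
        qed
        ultimately show ?thesis using UB2 ba
          by (intro exI2[of "b + 2*pi" "min (f q) (a + 2*pi)"]) auto
      next
        case False
        hence "\<forall>t\<ge>0. f t \<le> a + 2*pi" by auto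
        thus ?thesis using gtb ab by (intro exI2[of "a + 2*pi" b]) (auto intro: less_imp_le)
      qed
    qed
  qed
qed

lemma per_nat:
  assumes "\<forall>x. g (x + 2*pi) = g x"
  shows "g (x + 2*pi * real n) = (g x :: real)"
proof (induction n)
  case 0 then show ?case by simp
next
  case (Suc n)
  have e: "x + 2*pi * real (Suc n) = (x + 2*pi * real n) + 2*pi" by (simp add: algebra_simps)
  have "g ((x + 2*pi * real n) + 2*pi) = g (x + 2*pi * real n)" using assms by blast
  then show ?case using Suc e by metis
qed

lemma per_int:
  assumes "\<forall>x. g (x + 2*pi) = g x"
  shows "g (x + 2*pi * of_int k) = (g x :: real)"
proof (cases "k \<ge> 0")
  case True
  then have "(of_int k::real) = real (nat k)" by simp
  then show ?thesis using per_nat[OF assms, of x "nat k"] by metis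
next
  case False
  define n where "n = nat (-k)"
  have k: "x + 2*pi * of_int k = x - 2*pi*real n" using False unfolding n_def by simp
  have e: "x = (x - 2*pi*real n) + 2*pi * real n" by simp
  have "g ((x - 2*pi*real n) + 2*pi * real n) = g (x - 2*pi*real n)" by (rule per_nat[OF assms])
  then show ?thesis using k e by metis
qed

theorem proposition4p1:
  fixes I S :: "real \<Rightarrow> real"
    and N :: nat
    and \<omega> \<theta>0 :: "nat \<Rightarrow> real"
    and \<kappa> :: real
    and \<theta> :: "nat \<Rightarrow> real \<Rightarrow> real"
    and B :: "nat set"
  assumes I_per: "\<forall>x. I (x + 2 * pi) = I x"
    and S_per: "\<forall>x. S (x + 2 * pi) = S x"
    and I_lip: "\<exists>L. L-lipschitz_on UNIV I"
    and S_lip: "\<exists>L. L-lipschitz_on UNIV S"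
    and I_nonneg: "\<forall>x. I x \<ge> 0"
    and IS_min: "(INF x\<in>{-pi..pi}. I x * S x) < 0"
    and IS_max: "0 < (SUP x\<in>{-pi..pi}. I x * S x)"
    and ode: "\<forall>i\<in>{1..N}. \<forall>t\<ge>0.
        ((\<theta> i) has_real_derivative
           (\<omega> i + \<kappa> / real N * (\<Sum>j=1..N. I (\<theta> j t) * S (\<theta> i t)))) (at t within {0..})"
    and init: "\<forall>i\<in>{1..N}. \<theta> i 0 = \<theta>0 i"
    and B_sub: "B \<subseteq> {1..N}"
    and coupling: "\<kappa> > real N * Max ((\<lambda>i. \<bar>\<omega> i\<bar>) ` B) /
        min (- (INF x\<in>{-pi..pi}. I x * S x)) (SUP x\<in>{-pi..pi}. I x * S x)"
  shows "\<forall>i\<in>B. bdd_above (\<theta> i ` {0..}) \<and> bdd_below (\<theta> i ` {0..}) \<and>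
           (SUP t\<in>{0..}. \<theta> i t) - (INF t\<in>{0..}. \<theta> i t) < 2 * pi"
proof -
  obtain LI where LI: "LI-lipschitz_on UNIV I" using I_lip by auto
  obtain LS where LS: "LS-lipschitz_on UNIV S" using S_lip by auto
  have cI: "continuous_on UNIV I" by (rule lipschitz_on_continuous_on[OF LI])
  have cS: "continuous_on UNIV S" by (rule lipschitz_on_continuous_on[OF LS])
  have cIS: "continuous_on {-pi..pi} (\<lambda>x. I x * S x)"
    by (intro continuous_on_mult continuous_on_subset[OF cI] continuous_on_subset[OF cS]) auto
  define M where "M = (SUP x\<in>{-pi..pi}. I x * S x)"
  define m where "m = (INF x\<in>{-pi..pi}. I x * S x)"
  obtain xs where xs: "xs \<in> {-pi..pi}" "\<forall>y\<in>{-pi..pi}. I y * S y \<le> I xs * S xs"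
    using continuous_attains_sup[OF _ _ cIS] by auto
  obtain xm where xm: "xm \<in> {-pi..pi}" "\<forall>y\<in>{-pi..pi}. I xm * S xm \<le> I y * S y"
    using continuous_attains_inf[OF _ _ cIS] by auto
  have Mxs: "M = I xs * S xs" unfolding M_def
    by (rule cSup_eq_maximum) (use xs in auto)
  have mxm: "m = I xm * S xm" unfolding m_def
    by (rule cInf_eq_minimum) (use xm in auto)
  have Mpos: "M > 0" using IS_max M_def by simp
  have mneg: "m < 0" using IS_min m_def by simp
  have Sxs: "S xs > 0" using Mpos Mxs I_nonneg by (metis mult_le_0_iff not_le)
  have Sxm: "S xm < 0" using mneg mxm I_nonneg by (metis mult_nonneg_nonneg not_le)
  show ?thesis
  proof
    fix i assume iB: "i \<in> B"
    have iN: "i \<in> {1..N}" using iB B_sub by auto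
    hence Npos: "real N > 0" by auto
    have finB: "finite B" using B_sub finite_subset by blast
    define W where "W = Max ((\<lambda>i. \<bar>\<omega> i\<bar>) ` B)"
    have Wi: "\<bar>\<omega> i\<bar> \<le> W" unfolding W_def using finB iB by auto
    define \<mu> where "\<mu> = min (- m) M"
    have mupos: "\<mu> > 0" using Mpos mneg unfolding \<mu>_def by simp
    have kap: "\<kappa> > real N * W / \<mu>" using coupling unfolding W_def \<mu>_def m_def M_def .
    have "real N * W \<ge> 0" using Wi Npos by (meson abs_ge_zero order_trans zero_le_mult_iff less_imp_le)
    hence "real N * W / \<mu> \<ge> 0" using mupos by simp
    hence kpos: "\<kappa> > 0" using kap by linarith
    have kmu: "\<kappa> * \<mu> > real N * W" using kap mupos by (simp add: pos_divide_less_eq)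
    have "\<kappa> * M \<ge> \<kappa> * \<mu>" using kpos unfolding \<mu>_def by (intro mult_left_mono) auto
    hence "\<kappa> * M > real N * \<bar>\<omega> i\<bar>" using kmu Wi Npos
      by (smt (verit) mult_left_mono)
    hence kM: "\<kappa> / real N * M > \<bar>\<omega> i\<bar>" using Npos by (simp add: field_simps)
    have "\<kappa> * (-m) \<ge> \<kappa> * \<mu>" using kpos unfolding \<mu>_def by (intro mult_left_mono) auto
    hence "\<kappa> * (-m) > real N * \<bar>\<omega> i\<bar>" using kmu Wi Npos
      by (smt (verit) mult_left_mono)
    hence km: "\<kappa> / real N * (-m) > \<bar>\<omega> i\<bar>" using Npos by (simp add: field_simps)
    define f where "f = \<theta> i"
    define f' where "f' = (\<lambda>t. \<omega> i + \<kappa> / real N * (\<Sum>j=1..N. I (\<theta> j t) * S (\<theta> i t)))"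
    have deriv: "\<forall>t\<ge>0. (f has_real_derivative f' t) (at t within {0..})"
      using ode iN unfolding f_def f'_def by auto
    have sumge: "(\<Sum>j=1..N. I (\<theta> j t)) \<ge> I (\<theta> i t)" for t
      by (rule member_le_sum) (use iN I_nonneg in auto)
    have posA: "\<forall>t\<ge>0. \<forall>k::int. f t = xs + 2*pi * of_int k \<longrightarrow> f' t > 0"
    proof (intro allI impI)
      fix t :: real and k :: int assume "t \<ge> 0" and ft: "f t = xs + 2*pi * of_int k"
      have IS: "I (\<theta> i t) = I xs" "S (\<theta> i t) = S xs"
        using ft per_int[OF I_per] per_int[OF S_per] unfolding f_def by auto
      have "(\<Sum>j=1..N. I (\<theta> j t) * S (\<theta> i t)) = (\<Sum>j=1..N. I (\<theta> j t)) * S xs"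
        by (simp add: IS sum_distrib_right)
      also have "\<dots> \<ge> I xs * S xs" using sumge[of t] IS Sxs by (intro mult_right_mono) auto
      finally have "(\<Sum>j=1..N. I (\<theta> j t) * S (\<theta> i t)) \<ge> M" using Mxs by simp
      hence "\<kappa> / real N * (\<Sum>j=1..N. I (\<theta> j t) * S (\<theta> i t)) \<ge> \<kappa> / real N * M"
        using kpos Npos by (intro mult_left_mono) auto
      thus "f' t > 0" unfolding f'_def using kM by linarith
    qed
    have negB: "\<forall>t\<ge>0. \<forall>k::int. f t = xm + 2*pi * of_int k \<longrightarrow> f' t < 0"
    proof (intro allI impI)
      fix t :: real and k :: int assume "t \<ge> 0" and ft: "f t = xm + 2*pi * of_int k"
      have IS: "I (\<theta> i t) = I xm" "S (\<theta> i t) = S xm"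
        using ft per_int[OF I_per] per_int[OF S_per] unfolding f_def by auto
      have "(\<Sum>j=1..N. I (\<theta> j t) * S (\<theta> i t)) = (\<Sum>j=1..N. I (\<theta> j t)) * S xm"
        by (simp add: IS sum_distrib_right)
      also have "\<dots> \<le> I xm * S xm" using sumge[of t] IS Sxm by (intro mult_right_mono_neg) auto
      finally have "(\<Sum>j=1..N. I (\<theta> j t) * S (\<theta> i t)) \<le> m" using mxm by simp
      hence "\<kappa> / real N * (\<Sum>j=1..N. I (\<theta> j t) * S (\<theta> i t)) \<le> \<kappa> / real N * m"
        using kpos Npos by (intro mult_left_mono) auto
      thus "f' t < 0" unfolding f'_def using km by linarith
    qed
    define fa where "fa = \<lfloor>(f 0 - xs) / (2*pi)\<rfloor>"
    define a where "a = xs + 2*pi * of_int fa"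
    have "of_int fa \<le> (f 0 - xs) / (2*pi)" "(f 0 - xs) / (2*pi) < of_int fa + 1"
      unfolding fa_def by linarith+
    hence f0a: "a \<le> f 0" "f 0 < a + 2*pi" unfolding a_def using pi_gt_zero
      by (simp_all add: field_simps)
    define cb where "cb = \<lceil>(a - xm) / (2*pi)\<rceil>"
    define b where "b = xm + 2*pi * of_int cb"
    have "(a - xm) / (2*pi) \<le> of_int cb" "of_int cb < (a - xm) / (2*pi) + 1"
      unfolding cb_def by linarith+
    hence ab: "a \<le> b" "b < a + 2*pi" unfolding b_def using pi_gt_zero
      by (simp_all add: field_simps)
    have "a \<noteq> b"
    proof
      assume "a = b"
      hence "xm = xs + 2*pi * of_int (fa - cb)" unfolding a_def b_def by (simp add: algebra_simps)
      hence "I xm * S xm = I xs * S xs" using per_int[OF I_per] per_int[OF S_per] by metis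
      thus False using Mxs mxm Mpos mneg by simp
    qed
    with ab have ab': "a < b" by simp
    have posA': "\<forall>t\<ge>0. \<forall>k::int. f t = a + 2*pi * of_int k \<longrightarrow> f' t > 0"
    proof (intro allI impI)
      fix t :: real and k :: int assume "t \<ge> 0" "f t = a + 2*pi * of_int k"
      hence "f t = xs + 2*pi * of_int (fa + k)" unfolding a_def by (simp add: algebra_simps)
      thus "f' t > 0" using posA \<open>t \<ge> 0\<close> by blast
    qed
    have negB': "\<forall>t\<ge>0. \<forall>k::int. f t = b + 2*pi * of_int k \<longrightarrow> f' t < 0"
    proof (intro allI impI)
      fix t :: real and k :: int assume "t \<ge> 0" "f t = b + 2*pi * of_int k"
      hence "f t = xm + 2*pi * of_int (cb + k)" unfolding b_def by (simp add: algebra_simps)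
      thus "f' t < 0" using negB \<open>t \<ge> 0\<close> by blast
    qed
    obtain lo hi where lohi: "hi - lo < 2*pi" "\<forall>t\<ge>0. lo \<le> f t \<and> f t \<le> hi"
      using trap[OF deriv posA' negB' f0a ab' ab(2)] by blast
    have ba: "bdd_above (f ` {0..})" using lohi by (intro bdd_aboveI2[where M=hi]) auto
    have bb: "bdd_below (f ` {0..})" using lohi by (intro bdd_belowI2[where m=lo]) auto
    have "(SUP t\<in>{0..}. f t) \<le> hi" using lohi by (intro cSUP_least) auto
    moreover have "lo \<le> (INF t\<in>{0..}. f t)" using lohi by (intro cINF_greatest) auto
    ultimately show "bdd_above (\<theta> i ` {0..}) \<and> bdd_below (\<theta> i ` {0..}) \<and>
           (SUP t\<in>{0..}. \<theta> i t) - (INF t\<in>{0..}. \<theta> i t) < 2 * pi"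
      using ba bb lohi unfolding f_def by linarith
  qed
qed

end
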